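(* Let $(G,X,\Gamma)$ be a $(\mu,\nu)$-path system group, let $\eta\ge0$, and assume $G$ contains an $\eta$-quasi-convex element $(g,A)$. There exists $\theta=\theta(\eta,g,A)\ge1$ such that for every $\eta$-quasi-convex subgroup $(H,Y)$ of $G$: (I) for every $u\in G$, if $\operatorname{diam}(uA\cap Y)>\theta$ then $uA\subseteq Y^{+\theta}$; (II) for every subgroup $K$ with $H\le K\le G$, if $[K:H]>\theta$ then there exists $k\in K$ with $\operatorname{diam}(kA\cap Y)\le\theta$.
   Context: A path is a rectifiable continuous map $\alpha\colon[a,b]\to X$ parametrised by arc length; it is a $(\kappa,\lambda)$-quasi-geodesic if $d(\alpha(t),\alpha(t'))\le|t-t'|\le\kappa d(\alpha(t),\alpha(t'))+\lambda$. A $(\mu,\nu)$-path system on a geodesic metric space $X$ is a collection $\Gamma$ of paths closed under subpaths, such that any two points are joined by an element of $\Gamma$ and every element is a $(\mu,\nu)$-quasi-geodesic. A $(\mu,\nu)$-path system group $(G,X,\Gamma)$ is a group $G$ acting properly by isometries on a geodesic metric space $X$ (balls $B_G(x,r)=\{g: d(x,gx)\le r\}$ finite) with $\Gamma$ a $G$-invariant $(\mu,\nu)$-path system. $Y^{+\eta}=\{x: d(x,Y)\le\eta\}$. A subset $Y$ is $\eta$-quasi-convex if every $\gamma\in\Gamma$ with endpoints in $Y$ lies in $Y^{+\eta}$. A subgroup $H$ is $\eta$-quasi-convex, written $(H,Y)$, if $Y\subseteq X$ is an $H$-invariant $\eta$-quasi-convex subset on which $H$ acts $\eta$-coboundedly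 (for all $y,y'\in Y$ some $h\in H$ has $d(y,hy')\le\eta$). An element $g\in G$ is $\eta$-quasi-convex, written $(g,A)$, if $g$ has infinite order and $(\langle g\rangle,A)$ is an $\eta$-quasi-convex subgroup. The diameter of the empty set is $0$. *)

theory Defs
  imports "HOL-Analysis.Analysis" "HOL-Algebra.Group_Action" "HOL-Algebra.Generated_Groups"
    "HOL-Algebra.Multiplicative_Group"
begin

definition geodesic_space :: "'x::metric_space itself \<Rightarrow> bool" where
  "geodesic_space _ \<longleftrightarrow> (\<forall>x y::'x. \<exists>\<gamma>::real \<Rightarrow> 'x. \<gamma> 0 = x \<and> \<gamma> (dist x y) = y \<and>
      (\<forall>s\<in>{0..dist x y}. \<forall>t\<in>{0..dist x y}. dist (\<gamma> s) (\<gamma> t) = \<bar>s - t\<bar>))"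

definition partition_sums :: "(real \<Rightarrow> 'x::metric_space) \<Rightarrow> real \<Rightarrow> real \<Rightarrow> real set" where
  "partition_sums \<alpha> s t = {(\<Sum>i<n. dist (\<alpha> (p i)) (\<alpha> (p (Suc i)))) | p n.
      p 0 = s \<and> p n = t \<and> (\<forall>i<n. p i \<le> p (Suc i))}"

definition has_curve_length :: "(real \<Rightarrow> 'x::metric_space) \<Rightarrow> real \<Rightarrow> real \<Rightarrow> real \<Rightarrow> bool" where
  "has_curve_length \<alpha> s t L \<longleftrightarrow> (\<forall>v\<in>partition_sums \<alpha> s t. v \<le> L) \<and>
      (\<forall>e>0. \<exists>v\<in>partition_sums \<alpha> s t. L - e < v)"

text \<open>A path is a triple (a,b,alpha): a rectifiable continuous map on [a,b], parametrised by arc length.\<close>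
type_synonym 'x path = "real \<times> real \<times> (real \<Rightarrow> 'x)"

definition is_path :: "'x::metric_space path \<Rightarrow> bool" where
  "is_path p \<longleftrightarrow> (case p of (a, b, \<alpha>) \<Rightarrow> a \<le> b \<and> continuous_on {a..b} \<alpha> \<and>
      (\<forall>s t. a \<le> s \<and> s \<le> t \<and> t \<le> b \<longrightarrow> has_curve_length \<alpha> s t (t - s)))"

definition quasi_geodesic :: "real \<Rightarrow> real \<Rightarrow> 'x::metric_space path \<Rightarrow> bool" where
  "quasi_geodesic k l p \<longleftrightarrow> is_path p \<and> (case p of (a, b, \<alpha>) \<Rightarrow>
      (\<forall>t\<in>{a..b}. \<forall>t'\<in>{a..b}. dist (\<alpha> t) (\<alpha> t') \<le> \<bar>t - t'\<bar> \<and>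
          \<bar>t - t'\<bar> \<le> k * dist (\<alpha> t) (\<alpha> t') + l))"

definition path_system :: "real \<Rightarrow> real \<Rightarrow> 'x::metric_space path set \<Rightarrow> bool" where
  "path_system \<mu> \<nu> \<Gamma> \<longleftrightarrow>
     (\<forall>(a, b, \<alpha>)\<in>\<Gamma>. \<forall>s t. a \<le> s \<and> s \<le> t \<and> t \<le> b \<longrightarrow> (s, t, \<alpha>) \<in> \<Gamma>) \<and>
     (\<forall>x y. \<exists>(a, b, \<alpha>)\<in>\<Gamma>. \<alpha> a = x \<and> \<alpha> b = y) \<and>
     (\<forall>p\<in>\<Gamma>. quasi_geodesic \<mu> \<nu> p)"

definition nbhd :: "'x::metric_space set \<Rightarrow> real \<Rightarrow> 'x set" where
  "nbhd Y \<eta> = {x. Y \<noteq> {} \<and> infdist x Y \<le> \<eta>}"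

definition ediam :: "'x::metric_space set \<Rightarrow> ereal" where
  "ediam S = (if S = {} then 0 else (SUP x\<in>S. SUP y\<in>S. ereal (dist x y)))"

definition subgroup_index :: "('g, 'b) monoid_scheme \<Rightarrow> 'g set \<Rightarrow> 'g set \<Rightarrow> ereal" where
  "subgroup_index G K H = (let C = (\<lambda>k. H #>\<^bsub>G\<^esub> k) ` K in
      if finite C then ereal (real (card C)) else \<infinity>)"

definition path_system_group ::
  "real \<Rightarrow> real \<Rightarrow> ('g, 'b) monoid_scheme \<Rightarrow> ('g \<Rightarrow> 'x::metric_space \<Rightarrow> 'x) \<Rightarrow> 'x path set \<Rightarrow> bool" where
  "path_system_group \<mu> \<nu> G \<phi> \<Gamma> \<longleftrightarrow>
     group G \<and> geodesic_space TYPE('x) \<and>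
     group_action G UNIV \<phi> \<and>
     (\<forall>g\<in>carrier G. \<forall>x y. dist (\<phi> g x) (\<phi> g y) = dist x y) \<and>
     (\<forall>x r. finite {g\<in>carrier G. dist x (\<phi> g x) \<le> r}) \<and>
     path_system \<mu> \<nu> \<Gamma> \<and>
     (\<forall>g\<in>carrier G. \<forall>(a, b, \<alpha>)\<in>\<Gamma>. (a, b, \<phi> g \<circ> \<alpha>) \<in> \<Gamma>)"

definition quasi_convex_set :: "'x::metric_space path set \<Rightarrow> real \<Rightarrow> 'x set \<Rightarrow> bool" where
  "quasi_convex_set \<Gamma> \<eta> Y \<longleftrightarrow>
     (\<forall>(a, b, \<alpha>)\<in>\<Gamma>. \<alpha> a \<in> Y \<and> \<alpha> b \<in> Y \<longrightarrow> \<alpha> ` {a..b} \<subseteq> nbhd Y \<eta>)"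

definition quasi_convex_subgroup ::
  "('g, 'b) monoid_scheme \<Rightarrow> ('g \<Rightarrow> 'x::metric_space \<Rightarrow> 'x) \<Rightarrow> 'x path set \<Rightarrow> real \<Rightarrow> 'g set \<Rightarrow> 'x set \<Rightarrow> bool" where
  "quasi_convex_subgroup G \<phi> \<Gamma> \<eta> H Y \<longleftrightarrow>
     subgroup H G \<and>
     (\<forall>h\<in>H. \<phi> h ` Y \<subseteq> Y) \<and>
     quasi_convex_set \<Gamma> \<eta> Y \<and>
     (\<forall>y\<in>Y. \<forall>y'\<in>Y. \<exists>h\<in>H. dist y (\<phi> h y') \<le> \<eta>)"

definition quasi_convex_element ::
  "('g, 'b) monoid_scheme \<Rightarrow> ('g \<Rightarrow> 'x::metric_space \<Rightarrow> 'x) \<Rightarrow> 'x path set \<Rightarrow> real \<Rightarrow> 'g \<Rightarrow> 'x set \<Rightarrow> bool" where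
  "quasi_convex_element G \<phi> \<Gamma> \<eta> g A \<longleftrightarrow>
     g \<in> carrier G \<and> group.ord G g = 0 \<and>
     quasi_convex_subgroup G \<phi> \<Gamma> \<eta> (generate G {g}) A"

end

theory Submission imports Defs begin

lemma infdist_lessE:
  assumes "A \<noteq> {}" "infdist x A < d" obtains a where "a \<in> A" "dist x a < d"
proof -
  have "(INF a\<in>A. dist x a) < d" using assms by (simp add: infdist_notempty)
  then have "\<exists>a\<in>A. dist x a < d" using cINF_less_iff[of A "dist x" d] assms(1) by simp
  then obtain a where "a \<in> A" "dist x a < d" by blast
  then show ?thesis using that by blast
qed

lemma nbhd_near:
  assumes "x \<in> nbhd Y e" obtains y where "y \<in> Y" "dist x y < e + 1"
proof -
  from assms have "Y \<noteq> {}" "infdist x Y < e + 1" by (auto simp: nbhd_def)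
  then show ?thesis using infdist_lessE that by blast
qed

lemma nbhd_intro: "y \<in> Y \<Longrightarrow> dist x y \<le> e \<Longrightarrow> x \<in> nbhd Y e"
  unfolding nbhd_def using infdist_le2 by blast

lemma ediam_gtE:
  assumes "ereal c < ediam S" "c \<ge> 0" obtains x y where "x \<in> S" "y \<in> S" "c < dist x y"
proof -
  have ne: "S \<noteq> {}" using assms by (auto simp: ediam_def split: if_splits)
  then have "ereal c < (SUP x\<in>S. SUP y\<in>S. ereal (dist x y))" using assms by (simp add: ediam_def)
  then obtain x where x: "x \<in> S" "ereal c < (SUP y\<in>S. ereal (dist x y))" by (auto simp: less_SUP_iff)
  then obtain y where "y \<in> S" "ereal c < ereal (dist x y)" by (auto simp: less_SUP_iff)
  then show ?thesis using x that by auto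
qed

locale PSG =
  fixes \<mu> \<nu> \<eta> :: real and G :: "('g,'b) monoid_scheme" and \<phi> :: "'g \<Rightarrow> 'x::metric_space \<Rightarrow> 'x"
    and \<Gamma> :: "'x path set" and g :: 'g and A :: "'x set"
  assumes psg: "path_system_group \<mu> \<nu> G \<phi> \<Gamma>" and eta: "\<eta> \<ge> 0"
    and qce: "quasi_convex_element G \<phi> \<Gamma> \<eta> g A"
begin

lemma grp: "group G" using psg by (simp add: path_system_group_def)
lemma act: "group_action G UNIV \<phi>" using psg by (simp add: path_system_group_def)
lemma iso: "a \<in> carrier G \<Longrightarrow> dist (\<phi> a x) (\<phi> a y) = dist x y" using psg by (simp add: path_system_group_def)
lemma proper: "finite {f \<in> carrier G. dist x (\<phi> f x) \<le> r}" using psg by (simp add: path_system_group_def)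
lemma ps: "path_system \<mu> \<nu> \<Gamma>" using psg by (simp add: path_system_group_def)
lemma Gamma_inv: "a \<in> carrier G \<Longrightarrow> (s, t, \<alpha>) \<in> \<Gamma> \<Longrightarrow> (s, t, \<phi> a \<circ> \<alpha>) \<in> \<Gamma>"
  using psg unfolding path_system_group_def by blast

lemma act_mult: "a \<in> carrier G \<Longrightarrow> b \<in> carrier G \<Longrightarrow> \<phi> (a \<otimes>\<^bsub>G\<^esub> b) x = \<phi> a (\<phi> b x)"
  using group_action.composition_rule[OF act] by blast
lemma act_one: "\<phi> \<one>\<^bsub>G\<^esub> x = x"
  using group_action.id_eq_one[OF act] by (metis UNIV_I restrict_apply')
lemma act_inv_l: "a \<in> carrier G \<Longrightarrow> \<phi> (inv\<^bsub>G\<^esub> a) (\<phi> a x) = x"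
  by (metis act_mult act_one grp group.inv_closed group.l_inv)
lemma act_inv_r: "a \<in> carrier G \<Longrightarrow> \<phi> a (\<phi> (inv\<^bsub>G\<^esub> a) x) = x"
  by (metis act_mult act_one grp group.inv_closed group.r_inv)
lemma dist_inv: "a \<in> carrier G \<Longrightarrow> dist x (\<phi> (inv\<^bsub>G\<^esub> a) y) = dist (\<phi> a x) y"
  by (metis act_inv_r iso)

lemma g_carrier: "g \<in> carrier G" using qce by (simp add: quasi_convex_element_def)
lemma g_ord: "group.ord G g = 0" using qce by (simp add: quasi_convex_element_def)
lemma gen: "generate G {g} = range (\<lambda>k::int. g [^]\<^bsub>G\<^esub> k)"
  using group.generate_pow[OF grp g_carrier] by auto
lemma A_qcs: "quasi_convex_subgroup G \<phi> \<Gamma> \<eta> (generate G {g}) A"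
  using qce by (simp add: quasi_convex_element_def)

definition P :: "'x \<Rightarrow> int \<Rightarrow> 'x" where "P a0 k = \<phi> (g [^]\<^bsub>G\<^esub> k) a0"

lemma gp_carrier: "g [^]\<^bsub>G\<^esub> (k::int) \<in> carrier G" using grp g_carrier by (simp add: group.int_pow_closed)

lemma gp_inj: "inj (\<lambda>k::int. g [^]\<^bsub>G\<^esub> k)"
proof (rule injI)
  fix a b :: int assume "g [^]\<^bsub>G\<^esub> a = g [^]\<^bsub>G\<^esub> b"
  then show "a = b" using group.int_pow_eq[OF grp g_carrier, of a b] g_ord by simp
qed

lemma P_add: "\<phi> (g [^]\<^bsub>G\<^esub> a) (P a0 b) = P a0 (a + b)"
  unfolding P_def by (simp add: act_mult[symmetric] gp_carrier group.int_pow_mult[OF grp g_carrier])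

lemma P_dist: "dist (P a0 (k + r)) (P a0 k) = dist (P a0 r) a0"
  by (metis P_add iso gp_carrier P_def act_one grp add_0_right int_pow_0)

lemma P_in_A: "a0 \<in> A \<Longrightarrow> P a0 k \<in> A"
  using A_qcs unfolding quasi_convex_subgroup_def P_def gen by blast

lemma A_cob: "y \<in> A \<Longrightarrow> a0 \<in> A \<Longrightarrow> \<exists>k. dist y (P a0 k) \<le> \<eta>"
  using A_qcs unfolding quasi_convex_subgroup_def P_def gen by blast

lemma P_bounded: "\<exists>M::int. \<forall>k. dist a0 (P a0 k) \<le> R \<longrightarrow> \<bar>k\<bar> \<le> M"
proof -
  let ?S = "{k::int. dist a0 (P a0 k) \<le> R}"
  have "?S \<subseteq> (\<lambda>k. g [^]\<^bsub>G\<^esub> k) -` {f \<in> carrier G. dist a0 (\<phi> f a0) \<le> R}"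
    by (auto simp: P_def gp_carrier)
  then have fin: "finite ?S" using finite_vimageI[OF proper gp_inj] finite_subset by blast
  show ?thesis
    by (rule exI[of _ "Max (insert 0 (abs ` ?S))"]) (use fin in auto)
qed

end

context PSG begin

lemma inv_c: "a \<in> carrier G \<Longrightarrow> inv\<^bsub>G\<^esub> a \<in> carrier G" using grp by (simp add: group.inv_closed)
lemma mult_c: "a \<in> carrier G \<Longrightarrow> b \<in> carrier G \<Longrightarrow> a \<otimes>\<^bsub>G\<^esub> b \<in> carrier G"
  using grp by (simp add: group.is_monoid monoid.m_closed)

lemma partI:
  assumes a0: "a0 \<in> A"
  shows "\<exists>\<theta>1::real. \<theta>1 \<ge> 1 \<and> (\<forall>H Y u. quasi_convex_subgroup G \<phi> \<Gamma> \<eta> H Y \<longrightarrow> u \<in> carrier G \<longrightarrow>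
           ereal \<theta>1 < ediam (\<phi> u ` A \<inter> Y) \<longrightarrow> \<phi> u ` A \<subseteq> nbhd Y \<theta>1)"
proof -
  define C where "C = 2*\<eta> + 1"
  define s where "s = \<bar>\<mu>\<bar> * (2*C) + \<bar>\<nu>\<bar> + 1"
  define F1 where "F1 = {f \<in> carrier G. dist a0 (\<phi> f a0) \<le> 2*C + \<eta>}"
  define N where "N = card F1"
  define R where "R = 2*C + real N * s"
  obtain M where M: "\<forall>k. dist a0 (P a0 k) \<le> R \<longrightarrow> \<bar>k\<bar> \<le> M" using P_bounded by blast
  define D where "D = Max ((\<lambda>r. dist (P a0 r) a0) ` {-2*M..2*M})"
  have D: "dist (P a0 r) a0 \<le> D" if "\<bar>r\<bar> \<le> 2*M" for r
    unfolding D_def by (rule Max_ge) (use that in \<open>auto simp: abs_le_iff\<close>)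
  define \<theta>1 where "\<theta>1 = max 1 (max (real N * s) (\<eta> + D + C))"
  have Cpos: "C > 0" using eta C_def by simp
  have "0 \<le> \<bar>\<mu>\<bar> * (2*C)" using Cpos by simp
  then have spos: "s > 0" unfolding s_def by linarith
  have Aqc: "quasi_convex_set \<Gamma> \<eta> A" using A_qcs unfolding quasi_convex_subgroup_def by simp
  show ?thesis
  proof (intro exI[of _ \<theta>1] conjI allI impI)
    show "1 \<le> \<theta>1" unfolding \<theta>1_def by simp
    fix H Y u assume qY: "quasi_convex_subgroup G \<phi> \<Gamma> \<eta> H Y" and u: "u \<in> carrier G"
      and big: "ereal \<theta>1 < ediam (\<phi> u ` A \<inter> Y)"
    have H: "subgroup H G" and Yinv: "\<forall>h\<in>H. \<phi> h ` Y \<subseteq> Y" and Yqc: "quasi_convex_set \<Gamma> \<eta> Y"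
      and Ycob: "\<forall>y\<in>Y. \<forall>y'\<in>Y. \<exists>h\<in>H. dist y (\<phi> h y') \<le> \<eta>"
      using qY unfolding quasi_convex_subgroup_def by auto
    have Hc: "h \<in> H \<Longrightarrow> h \<in> carrier G" for h using H subgroup.subset by blast
    obtain x1 x2 where x1: "x1 \<in> \<phi> u ` A \<inter> Y" and x2: "x2 \<in> \<phi> u ` A \<inter> Y" and far: "\<theta>1 < dist x1 x2"
      using ediam_gtE[OF big] \<open>1 \<le> \<theta>1\<close> by (metis order_trans zero_le_one)
    obtain a1 where a1: "a1 \<in> A" "x1 = \<phi> u a1" using x1 by blast
    obtain a2 where a2: "a2 \<in> A" "x2 = \<phi> u a2" using x2 by blast
    have PS: "\<forall>x y. \<exists>(a, b, \<alpha>)\<in>\<Gamma>. \<alpha> a = x \<and> \<alpha> b = y" and PSq: "\<forall>p\<in>\<Gamma>. quasi_geodesic \<mu> \<nu> p"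
      using ps unfolding path_system_def by simp_all
    obtain p where p: "p \<in> \<Gamma>" "case p of (a, b, \<alpha>) \<Rightarrow> \<alpha> a = x1 \<and> \<alpha> b = x2"
      using bexE[OF spec[OF spec[OF PS, of x1], of x2]] by blast
    obtain a b \<alpha> where pe: "p = (a,b,\<alpha>)" by (cases p)
    have path: "(a,b,\<alpha>) \<in> \<Gamma>" "\<alpha> a = x1" "\<alpha> b = x2" using p pe by simp_all
    have qg: "quasi_geodesic \<mu> \<nu> (a,b,\<alpha>)" using bspec[OF PSq path(1)] .
    have ab: "a \<le> b" using qg unfolding quasi_geodesic_def is_path_def by simp
    have lip: "dist (\<alpha> t) (\<alpha> t') \<le> \<bar>t - t'\<bar>" and qgl: "\<bar>t - t'\<bar> \<le> \<mu> * dist (\<alpha> t) (\<alpha> t') + \<nu>"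
      if "t \<in> {a..b}" "t' \<in> {a..b}" for t t'
      using qg that unfolding quasi_geodesic_def by auto
    have "dist x1 x2 \<le> b - a" using lip[of a b] path ab by auto
    hence len: "real N * s \<le> b - a" using far unfolding \<theta>1_def by linarith
    define \<beta> where "\<beta> = \<phi> (inv\<^bsub>G\<^esub> u) \<circ> \<alpha>"
    have path\<beta>: "(a,b,\<beta>) \<in> \<Gamma>" using Gamma_inv[OF inv_c[OF u] path(1)] by (simp add: \<beta>_def)
    have "\<beta> a \<in> A" using a1 path u by (simp add: \<beta>_def act_inv_l)
    moreover have "\<beta> b \<in> A" using a2 path u by (simp add: \<beta>_def act_inv_l)
    ultimately have \<beta>nb: "\<beta> ` {a..b} \<subseteq> nbhd A \<eta>"
      using bspec[OF Aqc[unfolded quasi_convex_set_def] path\<beta>] by simp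
    have \<alpha>nb: "\<alpha> ` {a..b} \<subseteq> nbhd Y \<eta>"
      using bspec[OF Yqc[unfolded quasi_convex_set_def] path(1)] path x1 x2 by simp
    have nearA: "\<exists>k. dist (\<alpha> t) (\<phi> u (P a0 k)) < C" if t: "t \<in> {a..b}" for t
    proof -
      obtain a' where a': "a' \<in> A" "dist (\<beta> t) a' < \<eta> + 1" using \<beta>nb t nbhd_near by blast
      obtain k where k: "dist a' (P a0 k) \<le> \<eta>" using A_cob[OF a'(1) a0] by blast
      have "dist (\<beta> t) (P a0 k) < C" using a' k dist_triangle[of "\<beta> t" "P a0 k" a'] C_def by linarith
      moreover have "\<alpha> t = \<phi> u (\<beta> t)" using u by (simp add: \<beta>_def act_inv_r)
      ultimately show ?thesis using iso[OF u] by auto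
    qed
    have nearY: "\<exists>h\<in>H. dist (\<alpha> t) (\<phi> h x1) < C" if t: "t \<in> {a..b}" for t
    proof -
      obtain y where y: "y \<in> Y" "dist (\<alpha> t) y < \<eta> + 1" using \<alpha>nb t nbhd_near by blast
      obtain h where h: "h \<in> H" "dist y (\<phi> h x1) \<le> \<eta>" using Ycob y(1) x1 by blast
      show ?thesis using h y dist_triangle[of "\<alpha> t" "\<phi> h x1" y] C_def by (intro bexI[OF _ h(1)]) linarith
    qed
    define t where "t i = a + real i * s" for i :: nat
    have t_in: "t i \<in> {a..b}" if "i \<le> N" for i
    proof -
      have "real i * s \<le> real N * s" using that spos by (simp add: mult_right_mono)
      moreover have "0 \<le> real i * s" using spos by simp
      ultimately show ?thesis using len unfolding t_def by simp
    qed
    have "\<forall>i. \<exists>kk. i \<le> N \<longrightarrow> dist (\<alpha> (t i)) (\<phi> u (P a0 kk)) < C"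
    proof
      fix i show "\<exists>kk. i \<le> N \<longrightarrow> dist (\<alpha> (t i)) (\<phi> u (P a0 kk)) < C"
      proof (cases "i \<le> N")
        case True
        then obtain kk where "dist (\<alpha> (t i)) (\<phi> u (P a0 kk)) < C" using nearA[OF t_in[OF True]] by (elim exE)
        then show ?thesis by (intro exI impI)
      qed simp
    qed
    from choice[OF this] obtain k where k0: "\<forall>i. i \<le> N \<longrightarrow> dist (\<alpha> (t i)) (\<phi> u (P a0 (k i))) < C"
      by (elim exE)
    have k: "\<And>i. i \<le> N \<Longrightarrow> dist (\<alpha> (t i)) (\<phi> u (P a0 (k i))) < C" using k0 by blast
    have "\<forall>i. \<exists>h. i \<le> N \<longrightarrow> h \<in> H \<and> dist (\<alpha> (t i)) (\<phi> h x1) < C"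
    proof
      fix i show "\<exists>h. i \<le> N \<longrightarrow> h \<in> H \<and> dist (\<alpha> (t i)) (\<phi> h x1) < C"
      proof (cases "i \<le> N")
        case True
        then obtain h where "h \<in> H" "dist (\<alpha> (t i)) (\<phi> h x1) < C" using nearY[OF t_in[OF True]] by (elim bexE)
        then show ?thesis by (intro exI impI conjI)
      qed simp
    qed
    from choice[OF this] obtain hh where hh0: "\<forall>i. i \<le> N \<longrightarrow> hh i \<in> H \<and> dist (\<alpha> (t i)) (\<phi> (hh i) x1) < C"
      by (elim exE)
    have hh: "\<And>i. i \<le> N \<Longrightarrow> hh i \<in> H" "\<And>i. i \<le> N \<Longrightarrow> dist (\<alpha> (t i)) (\<phi> (hh i) x1) < C"
      using hh0 by blast+
    obtain kstar where ks: "dist a1 (P a0 kstar) \<le> \<eta>" using A_cob a1 a0 by blast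
    define w where "w = u \<otimes>\<^bsub>G\<^esub> g [^]\<^bsub>G\<^esub> kstar"
    have wc: "w \<in> carrier G" unfolding w_def by (rule mult_c[OF u gp_carrier])
    define X where "X i = inv\<^bsub>G\<^esub> (hh i) \<otimes>\<^bsub>G\<^esub> (u \<otimes>\<^bsub>G\<^esub> g [^]\<^bsub>G\<^esub> (k i))" for i
    have Xc: "i \<le> N \<Longrightarrow> X i \<in> carrier G" for i
    proof -
      assume i: "i \<le> N"
      have hc: "hh i \<in> carrier G" using hh i Hc by blast
      show ?thesis unfolding X_def by (rule mult_c[OF inv_c[OF hc] mult_c[OF u gp_carrier]])
    qed
    have Xact: "i \<le> N \<Longrightarrow> \<phi> (X i) y = \<phi> (inv\<^bsub>G\<^esub> (hh i)) (\<phi> u (\<phi> (g [^]\<^bsub>G\<^esub> (k i)) y))" for i y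
    proof -
      assume i: "i \<le> N"
      have hc: "hh i \<in> carrier G" using hh i Hc by blast
      show ?thesis unfolding X_def
        using act_mult[OF inv_c[OF hc] mult_c[OF u gp_carrier]] act_mult[OF u gp_carrier] by simp
    qed
    define f where "f i = inv\<^bsub>G\<^esub> w \<otimes>\<^bsub>G\<^esub> X i" for i
    have fF: "f i \<in> F1" if i: "i \<le> N" for i
    proof -
      have fc: "f i \<in> carrier G" unfolding f_def by (rule mult_c[OF inv_c[OF wc] Xc[OF i]])
      have hc: "hh i \<in> carrier G" using hh i Hc by blast
      let ?q = "\<phi> u (P a0 (k i))"
      have e1: "\<phi> (f i) a0 = \<phi> (inv\<^bsub>G\<^esub> w) (\<phi> (inv\<^bsub>G\<^esub> (hh i)) ?q)"
        unfolding f_def using act_mult[OF inv_c[OF wc] Xc[OF i]] Xact[OF i] by (simp add: P_def)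
      have "dist a0 (\<phi> (f i) a0) = dist (\<phi> w a0) (\<phi> (inv\<^bsub>G\<^esub> (hh i)) ?q)"
        using e1 dist_inv[OF wc] by simp
      also have "\<phi> w a0 = \<phi> u (P a0 kstar)" unfolding w_def P_def using act_mult[OF u gp_carrier] by simp
      also have "dist (\<phi> u (P a0 kstar)) (\<phi> (inv\<^bsub>G\<^esub> (hh i)) ?q)
           \<le> dist (\<phi> u (P a0 kstar)) x1 + dist x1 (\<phi> (inv\<^bsub>G\<^esub> (hh i)) ?q)" by (rule dist_triangle)
      also have "dist (\<phi> u (P a0 kstar)) x1 = dist (P a0 kstar) a1" using a1 iso[OF u] by simp
      also have "dist x1 (\<phi> (inv\<^bsub>G\<^esub> (hh i)) ?q) = dist (\<phi> (hh i) x1) ?q" using dist_inv[OF hc] by simp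
      also have "dist (\<phi> (hh i) x1) ?q \<le> dist (\<phi> (hh i) x1) (\<alpha> (t i)) + dist (\<alpha> (t i)) ?q" by (rule dist_triangle)
      finally have "dist a0 (\<phi> (f i) a0) \<le> dist (P a0 kstar) a1 + (dist (\<phi> (hh i) x1) (\<alpha> (t i)) + dist (\<alpha> (t i)) ?q)"
        by simp
      moreover have "dist (P a0 kstar) a1 \<le> \<eta>" using ks by (simp add: dist_commute)
      moreover have "dist (\<phi> (hh i) x1) (\<alpha> (t i)) < C" using hh(2)[OF i] by (simp add: dist_commute)
      moreover have "dist (\<alpha> (t i)) ?q < C" using k[OF i] .
      ultimately have "dist a0 (\<phi> (f i) a0) \<le> 2*C + \<eta>" by linarith
      then show ?thesis unfolding F1_def using fc by blast
    qed
    have fin1: "finite F1" unfolding F1_def by (rule proper)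
    have "\<not> inj_on f {..N}"
    proof
      assume "inj_on f {..N}"
      then have "card {..N} \<le> card F1" using card_inj_on_le[OF _ _ fin1] fF by blast
      then show False unfolding N_def by simp
    qed
    then obtain i j where ij: "i \<le> N" "j \<le> N" "i \<noteq> j" "f i = f j" unfolding inj_on_def by auto
    have Xeq: "\<phi> (X i) y = \<phi> (X j) y" for y
    proof -
      have "\<phi> (inv\<^bsub>G\<^esub> w) (\<phi> (X i) y) = \<phi> (inv\<^bsub>G\<^esub> w) (\<phi> (X j) y)"
        using ij(4) act_mult[OF inv_c[OF wc] Xc[OF ij(1)]] act_mult[OF inv_c[OF wc] Xc[OF ij(2)]]
        unfolding f_def by simp
      then have "\<phi> w (\<phi> (inv\<^bsub>G\<^esub> w) (\<phi> (X i) y)) = \<phi> w (\<phi> (inv\<^bsub>G\<^esub> w) (\<phi> (X j) y))" by simp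
      then show ?thesis using act_inv_r[OF wc] by simp
    qed
    define z where "z = hh j \<otimes>\<^bsub>G\<^esub> inv\<^bsub>G\<^esub> (hh i)"
    define m where "m = k j - k i"
    have zH: "z \<in> H" unfolding z_def using H hh ij by (simp add: subgroup.m_closed subgroup.m_inv_closed)
    have zc: "z \<in> carrier G" using zH Hc by blast
    have hic: "hh i \<in> carrier G" and hjc: "hh j \<in> carrier G" using hh ij Hc by auto
    have shift: "\<phi> z (\<phi> u (P a0 n)) = \<phi> u (P a0 (n + m))" for n
    proof -
      define Y0 where "Y0 = P a0 (n - k i)"
      have "\<phi> z (\<phi> u (P a0 n)) = \<phi> (hh j) (\<phi> (inv\<^bsub>G\<^esub> (hh i)) (\<phi> u (\<phi> (g [^]\<^bsub>G\<^esub> (k i)) Y0)))"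
        unfolding z_def Y0_def using act_mult[OF hjc inv_c[OF hic]] P_add[of "k i" a0 "n - k i"] by simp
      also have "\<dots> = \<phi> (hh j) (\<phi> (X j) Y0)" using Xact[OF ij(1)] Xeq by simp
      also have "\<dots> = \<phi> u (\<phi> (g [^]\<^bsub>G\<^esub> (k j)) Y0)" using Xact[OF ij(2)] act_inv_r[OF hjc] by simp
      also have "\<dots> = \<phi> u (P a0 (k j + (n - k i)))" unfolding Y0_def using P_add[of "k j" a0 "n - k i"] by simp
      also have "k j + (n - k i) = n + m" unfolding m_def by linarith
      finally show ?thesis .
    qed
    have t0: "t 0 = a" unfolding t_def by simp
    have kb: "\<bar>k l - k 0\<bar> \<le> M" if l: "l \<le> N" for l
    proof -
      have "dist a0 (P a0 (k l - k 0)) = dist (P a0 (k 0 + (k l - k 0))) (P a0 (k 0))"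
        unfolding P_dist by (rule dist_commute)
      also have "\<dots> = dist (\<phi> u (P a0 (k l))) (\<phi> u (P a0 (k 0)))" using iso[OF u] by simp
      also have "\<dots> \<le> dist (\<phi> u (P a0 (k l))) (\<alpha> (t l)) + dist (\<alpha> (t l)) (\<phi> u (P a0 (k 0)))" by (rule dist_triangle)
      also have "dist (\<alpha> (t l)) (\<phi> u (P a0 (k 0))) \<le> dist (\<alpha> (t l)) (\<alpha> (t 0)) + dist (\<alpha> (t 0)) (\<phi> u (P a0 (k 0)))" by (rule dist_triangle)
      finally have "dist a0 (P a0 (k l - k 0)) \<le> dist (\<phi> u (P a0 (k l))) (\<alpha> (t l)) + (dist (\<alpha> (t l)) (\<alpha> (t 0)) + dist (\<alpha> (t 0)) (\<phi> u (P a0 (k 0))))" by simp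
      moreover have "dist (\<phi> u (P a0 (k l))) (\<alpha> (t l)) < C" using k[OF l] by (simp add: dist_commute)
      moreover have "dist (\<alpha> (t 0)) (\<phi> u (P a0 (k 0))) < C" using k[of 0] by simp
      moreover have "dist (\<alpha> (t l)) (\<alpha> (t 0)) \<le> \<bar>t l - t 0\<bar>" using lip t_in l by auto
      moreover have "\<bar>t l - t 0\<bar> = real l * s" unfolding t_def using spos by simp
      moreover have "real l * s \<le> real N * s" using l spos by (simp add: mult_right_mono)
      ultimately have "dist a0 (P a0 (k l - k 0)) \<le> R" unfolding R_def by linarith
      then show ?thesis using M by blast
    qed
    have mb: "\<bar>m\<bar> \<le> 2*M" using kb[OF ij(1)] kb[OF ij(2)] unfolding m_def by linarith
    have m0: "m \<noteq> 0"
    proof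
      assume "m = 0"
      then have kk: "k i = k j" unfolding m_def by simp
      have "dist (\<alpha> (t i)) (\<alpha> (t j)) \<le> dist (\<alpha> (t i)) (\<phi> u (P a0 (k i))) + dist (\<phi> u (P a0 (k i))) (\<alpha> (t j))"
        by (rule dist_triangle)
      moreover have "dist (\<phi> u (P a0 (k i))) (\<alpha> (t j)) < C" using k[OF ij(2)] kk by (simp add: dist_commute)
      ultimately have d2: "dist (\<alpha> (t i)) (\<alpha> (t j)) \<le> 2*C" using k[OF ij(1)] by linarith
      have "\<mu> * dist (\<alpha> (t i)) (\<alpha> (t j)) \<le> \<bar>\<mu>\<bar> * dist (\<alpha> (t i)) (\<alpha> (t j))"
        by (intro mult_right_mono) simp_all
      also have "\<dots> \<le> \<bar>\<mu>\<bar> * (2*C)" using d2 by (intro mult_left_mono) simp_all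
      finally have "\<bar>t i - t j\<bar> \<le> \<bar>\<mu>\<bar> * (2*C) + \<bar>\<nu>\<bar>" using qgl[OF t_in[OF ij(1)] t_in[OF ij(2)]] by linarith
      hence "\<bar>t i - t j\<bar> < s" unfolding s_def by linarith
      moreover have "\<bar>t i - t j\<bar> = \<bar>real i - real j\<bar> * s"
      proof -
        have "t i - t j = (real i - real j) * s" unfolding t_def by (simp add: left_diff_distrib)
        then show ?thesis using spos by (simp add: abs_mult)
      qed
      moreover have "1 \<le> \<bar>real i - real j\<bar>" using ij(3) by linarith
      moreover have "1 * s \<le> \<bar>real i - real j\<bar> * s"
        using \<open>1 \<le> \<bar>real i - real j\<bar>\<close> spos by (intro mult_right_mono) simp_all
      ultimately show False by linarith
    qed
    have base0: "\<exists>y\<in>Y. dist (\<phi> u (P a0 (k 0 + r))) y \<le> D + C" if r: "\<bar>r\<bar> \<le> 2*M" for r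
    proof (rule bexI[of _ x1])
      show "x1 \<in> Y" using x1 by blast
      have "dist (\<phi> u (P a0 (k 0 + r))) x1 \<le> dist (\<phi> u (P a0 (k 0 + r))) (\<phi> u (P a0 (k 0))) + dist (\<phi> u (P a0 (k 0))) x1"
        by (rule dist_triangle)
      moreover have "dist (\<phi> u (P a0 (k 0 + r))) (\<phi> u (P a0 (k 0))) = dist (P a0 r) a0" unfolding iso[OF u] by (rule P_dist)
      moreover have "dist (\<phi> u (P a0 (k 0))) x1 < C" using k[of 0] path t0 by (simp add: dist_commute)
      ultimately show "dist (\<phi> u (P a0 (k 0 + r))) x1 \<le> D + C" using D[OF r] by linarith
    qed
    have ind: "\<exists>y\<in>Y. dist (\<phi> u (P a0 (k 0 + r + q * m))) y \<le> D + C" if r: "\<bar>r\<bar> \<le> 2*M" for r q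
    proof (induction q rule: int_induct[where k=0])
      case base
      then show ?case using base0[OF r] by simp
    next
      case (step1 q)
      then obtain y where y: "y \<in> Y" "dist (\<phi> u (P a0 (k 0 + r + q * m))) y \<le> D + C" by blast
      have e0: "(q + 1) * m = q * m + m" by (rule distrib_right[of q 1 m, unfolded mult_1])
      have e: "k 0 + r + (q+1) * m = (k 0 + r + q * m) + m" unfolding e0 by linarith
      have "\<phi> u (P a0 (k 0 + r + (q+1) * m)) = \<phi> z (\<phi> u (P a0 (k 0 + r + q * m)))"
        unfolding e by (rule shift[symmetric])
      then have "dist (\<phi> u (P a0 (k 0 + r + (q+1) * m))) (\<phi> z y) = dist (\<phi> u (P a0 (k 0 + r + q * m))) y"
        using iso[OF zc] by (simp only:)
      then have dd: "dist (\<phi> u (P a0 (k 0 + r + (q+1) * m))) (\<phi> z y) = dist (\<phi> u (P a0 (k 0 + r + q * m))) y" .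
      have mem: "\<phi> z y \<in> Y" using Yinv zH y(1) by blast
      have "dist (\<phi> u (P a0 (k 0 + r + (q+1) * m))) (\<phi> z y) \<le> D + C" unfolding dd by (rule y(2))
      then show ?case using mem by (rule rev_bexI[rotated])
    next
      case (step2 q)
      then obtain y where y: "y \<in> Y" "dist (\<phi> u (P a0 (k 0 + r + q * m))) y \<le> D + C" by blast
      have e0: "(q - 1) * m = q * m - m" by (rule left_diff_distrib[of q 1 m, unfolded mult_1])
      have e: "k 0 + r + q * m = (k 0 + r + (q-1) * m) + m" unfolding e0 by linarith
      have "\<phi> u (P a0 (k 0 + r + q * m)) = \<phi> z (\<phi> u (P a0 (k 0 + r + (q-1) * m)))"
        unfolding e by (rule shift[symmetric])
      then have "\<phi> (inv\<^bsub>G\<^esub> z) (\<phi> u (P a0 (k 0 + r + q * m))) = \<phi> u (P a0 (k 0 + r + (q-1) * m))"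
        using act_inv_l[OF zc] by (simp only:)
      then have "\<phi> u (P a0 (k 0 + r + (q-1) * m)) = \<phi> (inv\<^bsub>G\<^esub> z) (\<phi> u (P a0 (k 0 + r + q * m)))"
        by (rule sym)
      then have dd: "dist (\<phi> u (P a0 (k 0 + r + (q-1) * m))) (\<phi> (inv\<^bsub>G\<^esub> z) y) = dist (\<phi> u (P a0 (k 0 + r + q * m))) y"
        using iso[OF inv_c[OF zc]] by (simp only:)
      have mem: "\<phi> (inv\<^bsub>G\<^esub> z) y \<in> Y" using Yinv subgroup.m_inv_closed[OF H zH] y(1) by blast
      have "dist (\<phi> u (P a0 (k 0 + r + (q-1) * m))) (\<phi> (inv\<^bsub>G\<^esub> z) y) \<le> D + C" unfolding dd by (rule y(2))
      then show ?case using mem by (rule rev_bexI[rotated])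
    qed
    show "\<phi> u ` A \<subseteq> nbhd Y \<theta>1"
    proof
      fix x assume "x \<in> \<phi> u ` A"
      then obtain a' where a': "a' \<in> A" "x = \<phi> u a'" by blast
      obtain n where n: "dist a' (P a0 n) \<le> \<eta>" using A_cob[OF a'(1) a0] by blast
      define r where "r = (n - k 0) mod m"
      define q where "q = (n - k 0) div m"
      have nd: "n = k 0 + r + q * m" using div_mult_mod_eq[of "n - k 0" m] unfolding r_def q_def by linarith
      have "\<bar>r\<bar> < \<bar>m\<bar>" unfolding r_def using abs_mod_less m0 by blast
      then have "\<bar>r\<bar> \<le> 2*M" using mb by linarith
      then obtain y where y: "y \<in> Y" "dist (\<phi> u (P a0 n)) y \<le> D + C" using ind[of r q] unfolding nd[symmetric] by blast
      have "dist x y \<le> dist x (\<phi> u (P a0 n)) + dist (\<phi> u (P a0 n)) y" by (rule dist_triangle)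
      moreover have "dist x (\<phi> u (P a0 n)) \<le> \<eta>" unfolding a'(2) iso[OF u] by (rule n)
      moreover have "\<eta> + D + C \<le> \<theta>1" unfolding \<theta>1_def by (rule max.coboundedI2, rule max.cobounded2)
      ultimately have "dist x y \<le> \<theta>1" using y(2) by linarith
      then show "x \<in> nbhd Y \<theta>1" by (rule nbhd_intro[OF y(1)])
    qed
  qed
qed


lemma nbhd_mono: "e \<le> e' \<Longrightarrow> nbhd Y e \<subseteq> nbhd Y e'"
  unfolding nbhd_def by auto

lemma main_nonempty:
  assumes a0: "a0 \<in> A"
  shows "\<exists>\<theta>::real. \<theta> \<ge> 1 \<and>
    (\<forall>H Y. quasi_convex_subgroup G \<phi> \<Gamma> \<eta> H Y \<longrightarrow>
       (\<forall>u\<in>carrier G. ediam (\<phi> u ` A \<inter> Y) > ereal \<theta> \<longrightarrow> \<phi> u ` A \<subseteq> nbhd Y \<theta>) \<and>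
       (\<forall>K. subgroup K G \<and> H \<subseteq> K \<longrightarrow> subgroup_index G K H > ereal \<theta> \<longrightarrow>
          (\<exists>k\<in>K. ediam (\<phi> k ` A \<inter> Y) \<le> ereal \<theta>)))"
proof -
  obtain \<theta>1 where th1: "\<theta>1 \<ge> 1" and P1': "\<forall>H Y u. quasi_convex_subgroup G \<phi> \<Gamma> \<eta> H Y \<longrightarrow> u \<in> carrier G \<longrightarrow>
           ereal \<theta>1 < ediam (\<phi> u ` A \<inter> Y) \<longrightarrow> \<phi> u ` A \<subseteq> nbhd Y \<theta>1"
    using partI[OF a0] by (elim exE conjE)
  note P1 = P1'[rule_format]
  define R2 where "R2 = 2*\<theta>1 + 2 + \<eta>"
  define F2 where "F2 = {f \<in> carrier G. dist a0 (\<phi> f a0) \<le> R2}"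
  define \<theta> where "\<theta> = max \<theta>1 (real (card F2))"
  have fin2: "finite F2" unfolding F2_def by (rule proper)
  show ?thesis
  proof (intro exI[of _ \<theta>] conjI allI impI ballI)
    show "1 \<le> \<theta>" using th1 unfolding \<theta>_def by simp
    fix H Y assume qY: "quasi_convex_subgroup G \<phi> \<Gamma> \<eta> H Y"
    have H: "subgroup H G" and Ycob: "\<forall>y\<in>Y. \<forall>y'\<in>Y. \<exists>h\<in>H. dist y (\<phi> h y') \<le> \<eta>"
      using qY unfolding quasi_convex_subgroup_def by blast+
    have Hc: "h \<in> H \<Longrightarrow> h \<in> carrier G" for h using H subgroup.subset by blast
    have le1: "ereal \<theta>1 \<le> ereal \<theta>" unfolding \<theta>_def ereal_less_eq by (rule max.cobounded1)
    {
      fix u assume u: "u \<in> carrier G" and big: "ereal \<theta> < ediam (\<phi> u ` A \<inter> Y)"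
      have "ereal \<theta>1 < ediam (\<phi> u ` A \<inter> Y)" using le1 big by (rule le_less_trans)
      then have "\<phi> u ` A \<subseteq> nbhd Y \<theta>1" using P1[OF qY u] by blast
      also have "\<dots> \<subseteq> nbhd Y \<theta>" by (rule nbhd_mono) (unfold \<theta>_def, rule max.cobounded1)
      finally show "\<phi> u ` A \<subseteq> nbhd Y \<theta>" .
    }
    fix K assume K: "subgroup K G \<and> H \<subseteq> K" and idx: "ereal \<theta> < subgroup_index G K H"
    show "\<exists>k\<in>K. ediam (\<phi> k ` A \<inter> Y) \<le> ereal \<theta>"
    proof (rule ccontr)
      assume none: "\<not> ?thesis"
      have Kc: "k \<in> K \<Longrightarrow> k \<in> carrier G" for k using K subgroup.subset by blast
      have nb: "\<phi> k ` A \<subseteq> nbhd Y \<theta>1" if k: "k \<in> K" for k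
      proof -
        have "\<not> ediam (\<phi> k ` A \<inter> Y) \<le> ereal \<theta>" using none k by blast
        then have "ereal \<theta> < ediam (\<phi> k ` A \<inter> Y)" by (simp only: not_le)
        then have "ereal \<theta>1 < ediam (\<phi> k ` A \<inter> Y)" by (rule le_less_trans[OF le1])
        then show ?thesis using P1[OF qY Kc[OF k]] by blast
      qed
      have oneK: "\<one>\<^bsub>G\<^esub> \<in> K" using K subgroup.one_closed by blast
      have "\<phi> \<one>\<^bsub>G\<^esub> a0 \<in> \<phi> \<one>\<^bsub>G\<^esub> ` A" using a0 by (rule imageI)
      with nb[OF oneK] have "\<phi> \<one>\<^bsub>G\<^esub> a0 \<in> nbhd Y \<theta>1" by (rule subsetD)
      then have "a0 \<in> nbhd Y \<theta>1" by (simp only: act_one)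
      then obtain y0 where y0: "y0 \<in> Y" "dist a0 y0 < \<theta>1 + 1" using nbhd_near by blast
      have cov: "\<exists>f\<in>F2. H #>\<^bsub>G\<^esub> k = H #>\<^bsub>G\<^esub> f" if k: "k \<in> K" for k
      proof -
        have kc: "k \<in> carrier G" using Kc k .
        have "\<phi> k a0 \<in> nbhd Y \<theta>1" using nb[OF k] imageI[OF a0] by (rule subsetD)
        then obtain y where y: "y \<in> Y" "dist (\<phi> k a0) y < \<theta>1 + 1" using nbhd_near by blast
        obtain h where h: "h \<in> H" "dist y (\<phi> h y0) \<le> \<eta>" using Ycob y(1) y0(1) by blast
        have hc: "h \<in> carrier G" using Hc h(1) .
        define f where "f = inv\<^bsub>G\<^esub> h \<otimes>\<^bsub>G\<^esub> k"
        have fc: "f \<in> carrier G" unfolding f_def using inv_c[OF hc] kc by (rule mult_c)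
        have d1: "dist a0 (\<phi> f a0) = dist (\<phi> h a0) (\<phi> k a0)"
          unfolding f_def act_mult[OF inv_c[OF hc] kc] by (rule dist_inv[OF hc])
        have d2: "dist (\<phi> h a0) (\<phi> k a0) \<le> dist (\<phi> h a0) (\<phi> h y0) + dist (\<phi> h y0) (\<phi> k a0)" by (rule dist_triangle)
        have d3: "dist (\<phi> h y0) (\<phi> k a0) \<le> dist (\<phi> h y0) y + dist y (\<phi> k a0)" by (rule dist_triangle)
        have d4: "dist (\<phi> h a0) (\<phi> h y0) = dist a0 y0" by (rule iso[OF hc])
        have c1: "dist (\<phi> h y0) y \<le> \<eta>" by (subst dist_commute) (rule h(2))
        have c2: "dist y (\<phi> k a0) < \<theta>1 + 1" by (subst dist_commute) (rule y(2))
        have "dist a0 (\<phi> f a0) \<le> R2" unfolding R2_def using d1 d2 d3 d4 c1 c2 y0(2) by linarith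
        then have fF: "f \<in> F2" unfolding F2_def using fc by blast
        have "H #>\<^bsub>G\<^esub> f = (H #>\<^bsub>G\<^esub> inv\<^bsub>G\<^esub> h) #>\<^bsub>G\<^esub> k"
          unfolding f_def by (rule group.coset_mult_assoc[OF grp subgroup.subset[OF H] inv_c[OF hc] kc, symmetric])
        also have "H #>\<^bsub>G\<^esub> inv\<^bsub>G\<^esub> h = H"
          by (rule group.coset_join2[OF grp inv_c[OF hc] H subgroup.m_inv_closed[OF H h(1)]])
        finally have eq: "H #>\<^bsub>G\<^esub> f = H #>\<^bsub>G\<^esub> k" .
        show ?thesis
        proof (rule bexI[of _ f])
          show "H #>\<^bsub>G\<^esub> k = H #>\<^bsub>G\<^esub> f" using eq by (rule sym)
          show "f \<in> F2" by (rule fF)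
        qed
      qed
      let ?C = "(\<lambda>k. H #>\<^bsub>G\<^esub> k) ` K"
      have sub: "?C \<subseteq> (\<lambda>f. H #>\<^bsub>G\<^esub> f) ` F2"
      proof
        fix c assume "c \<in> ?C"
        then obtain k where k: "k \<in> K" "c = H #>\<^bsub>G\<^esub> k" by (rule imageE)
        obtain f where f: "f \<in> F2" "H #>\<^bsub>G\<^esub> k = H #>\<^bsub>G\<^esub> f" using cov[OF k(1)] by (rule bexE)
        show "c \<in> (\<lambda>f. H #>\<^bsub>G\<^esub> f) ` F2" unfolding k(2) f(2) by (rule imageI[OF f(1)])
      qed
      have finI: "finite ((\<lambda>f. H #>\<^bsub>G\<^esub> f) ` F2)" using fin2 by (rule finite_imageI)
      have finC: "finite ?C" by (rule finite_subset[OF sub finI])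
      have "card ?C \<le> card ((\<lambda>f. H #>\<^bsub>G\<^esub> f) ` F2)" by (rule card_mono[OF finI sub])
      also have "\<dots> \<le> card F2" by (rule card_image_le[OF fin2])
      finally have cle: "real (card ?C) \<le> real (card F2)" by (simp only: of_nat_le_iff)
      have "real (card F2) \<le> \<theta>" unfolding \<theta>_def by (rule max.cobounded2)
      with cle have le: "real (card ?C) \<le> \<theta>" by (rule order_trans)
      have si: "subgroup_index G K H = ereal (real (card ?C))"
        unfolding subgroup_index_def Let_def if_P[OF finC] by (rule refl)
      have "\<theta> < real (card ?C)" using idx unfolding si by (simp only: less_ereal.simps(1))
      with le show False by linarith
    qed
  qed
qed

end

theorem mainTheorem12:
  fixes \<mu> \<nu> \<eta> :: real
    and G :: "('g, 'b) monoid_scheme"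
    and \<phi> :: "'g \<Rightarrow> 'x::metric_space \<Rightarrow> 'x"
    and \<Gamma> :: "'x path set"
    and g :: 'g and A :: "'x set"
  assumes "path_system_group \<mu> \<nu> G \<phi> \<Gamma>"
    and "\<eta> \<ge> 0"
    and "quasi_convex_element G \<phi> \<Gamma> \<eta> g A"
  shows "\<exists>\<theta>::real. \<theta> \<ge> 1 \<and>
    (\<forall>H Y. quasi_convex_subgroup G \<phi> \<Gamma> \<eta> H Y \<longrightarrow>
       (\<forall>u\<in>carrier G. ediam (\<phi> u ` A \<inter> Y) > ereal \<theta> \<longrightarrow> \<phi> u ` A \<subseteq> nbhd Y \<theta>) \<and>
       (\<forall>K. subgroup K G \<and> H \<subseteq> K \<longrightarrow> subgroup_index G K H > ereal \<theta> \<longrightarrow>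
          (\<exists>k\<in>K. ediam (\<phi> k ` A \<inter> Y) \<le> ereal \<theta>)))"
proof (cases "A = {}")
  case True
  have "\<forall>H Y. quasi_convex_subgroup G \<phi> \<Gamma> \<eta> H Y \<longrightarrow>
       (\<forall>u\<in>carrier G. ediam (\<phi> u ` A \<inter> Y) > ereal 1 \<longrightarrow> \<phi> u ` A \<subseteq> nbhd Y 1) \<and>
       (\<forall>K. subgroup K G \<and> H \<subseteq> K \<longrightarrow> subgroup_index G K H > ereal 1 \<longrightarrow>
          (\<exists>k\<in>K. ediam (\<phi> k ` A \<inter> Y) \<le> ereal 1))"
  proof (intro allI impI conjI)
    fix H Y
    show "\<forall>u\<in>carrier G. ediam (\<phi> u ` A \<inter> Y) > ereal 1 \<longrightarrow> \<phi> u ` A \<subseteq> nbhd Y 1"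
      using True by (simp add: ediam_def)
    fix K assume K: "subgroup K G \<and> H \<subseteq> K"
    have "\<one>\<^bsub>G\<^esub> \<in> K" using K subgroup.one_closed by blast
    moreover have "ediam (\<phi> \<one>\<^bsub>G\<^esub> ` A \<inter> Y) \<le> ereal 1" using True by (simp add: ediam_def)
    ultimately show "\<exists>k\<in>K. ediam (\<phi> k ` A \<inter> Y) \<le> ereal 1" by (rule bexI[rotated])
  qed
  then show ?thesis by (intro exI[of _ 1]) simp
next
  case False
  then obtain a0 where a0: "a0 \<in> A" by blast
  show ?thesis by (rule PSG.main_nonempty[OF PSG.intro[OF assms] a0])
qed

end
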